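(* Let $G$ be a connected, locally finite graph with exactly one end, and let $\Gamma$ be a group acting quasi-transitively on $G$. Let $N$ be a $\Gamma$-canonical nested set of tight separations of $G$, all of finite order. Then $\vec N$ contains no strictly increasing infinite sequence.
   Context: A group acts quasi-transitively if it acts by automorphisms with finitely many vertex orbits. A separation of $G$ is $\{A,B\}$ with $A\cup B=V(G)$ and no edge between $A\setminus B$ and $B\setminus A$; order $|A\cap B|$; its orientations are $(A,B)$ and $(B,A)$, partially ordered by $(A,B)\le(C,D)$ iff $A\subseteq C$ and $B\supseteq D$. It is tight if $G-(A\cap B)$ has components $C\subseteq G[A\setminus B]$ and $D\subseteq G[B\setminus A]$ such that every vertex of $A\cap B$ has a neighbour in $C$ and one in $D$. A set of separations is nested if any two of its elements have comparable orientations, and $\Gamma$-canonical if it contains $\{g\cdot A,g\cdot B\}$ for each member $\{A,B\}$ and $g\in\Gamma$. $\vec N$ is the set of orientations of elements of $N$. *)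

theory Defs
  imports Main "HOL-Algebra.Group_Action"
begin

definition graph :: "'v set \<Rightarrow> ('v \<Rightarrow> 'v \<Rightarrow> bool) \<Rightarrow> bool" where
  "graph V E \<longleftrightarrow> (\<forall>u v. E u v \<longrightarrow> u \<in> V \<and> v \<in> V \<and> u \<noteq> v \<and> E v u)"

definition conn_avoid :: "'v set \<Rightarrow> ('v \<Rightarrow> 'v \<Rightarrow> bool) \<Rightarrow> 'v set \<Rightarrow> 'v \<Rightarrow> 'v \<Rightarrow> bool" where
  "conn_avoid V E X u w \<longleftrightarrow>
     (\<exists>p :: nat \<Rightarrow> 'v. \<exists>n. p 0 = u \<and> p n = w \<and> (\<forall>i\<le>n. p i \<in> V - X)
        \<and> (\<forall>i<n. E (p i) (p (Suc i))))"

definition connected_graph :: "'v set \<Rightarrow> ('v \<Rightarrow> 'v \<Rightarrow> bool) \<Rightarrow> bool" where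
  "connected_graph V E \<longleftrightarrow> V \<noteq> {} \<and> (\<forall>u\<in>V. \<forall>w\<in>V. conn_avoid V E {} u w)"

definition locally_finite :: "'v set \<Rightarrow> ('v \<Rightarrow> 'v \<Rightarrow> bool) \<Rightarrow> bool" where
  "locally_finite V E \<longleftrightarrow> (\<forall>v\<in>V. finite {w. E v w})"

definition ray :: "'v set \<Rightarrow> ('v \<Rightarrow> 'v \<Rightarrow> bool) \<Rightarrow> (nat \<Rightarrow> 'v) \<Rightarrow> bool" where
  "ray V E r \<longleftrightarrow> inj r \<and> (\<forall>n. r n \<in> V \<and> E (r n) (r (Suc n)))"

definition equiv_rays :: "'v set \<Rightarrow> ('v \<Rightarrow> 'v \<Rightarrow> bool) \<Rightarrow> (nat \<Rightarrow> 'v) \<Rightarrow> (nat \<Rightarrow> 'v) \<Rightarrow> bool" where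
  "equiv_rays V E r s \<longleftrightarrow>
     (\<forall>X. finite X \<longrightarrow> (\<exists>n. \<forall>k\<ge>n. \<forall>l\<ge>n. conn_avoid V E X (r k) (s l)))"

text \<open>Ends are the equivalence classes of rays; G has exactly one end iff there is a ray
  and any two rays are equivalent.\<close>
definition one_ended :: "'v set \<Rightarrow> ('v \<Rightarrow> 'v \<Rightarrow> bool) \<Rightarrow> bool" where
  "one_ended V E \<longleftrightarrow> (\<exists>r. ray V E r) \<and> (\<forall>r s. ray V E r \<longrightarrow> ray V E s \<longrightarrow> equiv_rays V E r s)"

definition acts_by_automorphisms ::
  "('g, 'b) monoid_scheme \<Rightarrow> 'v set \<Rightarrow> ('v \<Rightarrow> 'v \<Rightarrow> bool) \<Rightarrow> ('g \<Rightarrow> 'v \<Rightarrow> 'v) \<Rightarrow> bool" where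
  "acts_by_automorphisms \<Gamma> V E \<phi> \<longleftrightarrow> group_action \<Gamma> V \<phi> \<and>
     (\<forall>g\<in>carrier \<Gamma>. \<forall>u\<in>V. \<forall>w\<in>V. E u w \<longleftrightarrow> E (\<phi> g u) (\<phi> g w))"

definition quasi_transitive ::
  "('g, 'b) monoid_scheme \<Rightarrow> 'v set \<Rightarrow> ('v \<Rightarrow> 'v \<Rightarrow> bool) \<Rightarrow> ('g \<Rightarrow> 'v \<Rightarrow> 'v) \<Rightarrow> bool" where
  "quasi_transitive \<Gamma> V E \<phi> \<longleftrightarrow> acts_by_automorphisms \<Gamma> V E \<phi> \<and> finite (orbits \<Gamma> V \<phi>)"

definition oriented_sep :: "'v set \<Rightarrow> ('v \<Rightarrow> 'v \<Rightarrow> bool) \<Rightarrow> 'v set \<Rightarrow> 'v set \<Rightarrow> bool" where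
  "oriented_sep V E A B \<longleftrightarrow> A \<union> B = V \<and> (\<forall>a\<in>A - B. \<forall>b\<in>B - A. \<not> E a b)"

definition separation :: "'v set \<Rightarrow> ('v \<Rightarrow> 'v \<Rightarrow> bool) \<Rightarrow> 'v set set \<Rightarrow> bool" where
  "separation V E S \<longleftrightarrow> (\<exists>A B. S = {A, B} \<and> oriented_sep V E A B)"

definition orientations :: "'v set set \<Rightarrow> ('v set \<times> 'v set) set" where
  "orientations S = {(A, B). S = {A, B}}"

definition vec :: "'v set set set \<Rightarrow> ('v set \<times> 'v set) set" where
  "vec N = (\<Union>S\<in>N. orientations S)"

definition sep_le :: "'v set \<times> 'v set \<Rightarrow> 'v set \<times> 'v set \<Rightarrow> bool" where
  "sep_le s t \<longleftrightarrow> fst s \<subseteq> fst t \<and> snd s \<supseteq> snd t"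

definition finite_order :: "'v set set \<Rightarrow> bool" where
  "finite_order S \<longleftrightarrow> (\<forall>(A, B)\<in>orientations S. finite (A \<inter> B))"

definition component :: "'v set \<Rightarrow> ('v \<Rightarrow> 'v \<Rightarrow> bool) \<Rightarrow> 'v set \<Rightarrow> 'v set \<Rightarrow> bool" where
  "component V E X C \<longleftrightarrow> (\<exists>x\<in>V - X. C = {y. conn_avoid V E X x y})"

definition tight_oriented :: "'v set \<Rightarrow> ('v \<Rightarrow> 'v \<Rightarrow> bool) \<Rightarrow> 'v set \<Rightarrow> 'v set \<Rightarrow> bool" where
  "tight_oriented V E A B \<longleftrightarrow>
     (\<exists>C D. component V E (A \<inter> B) C \<and> component V E (A \<inter> B) D \<and> C \<subseteq> A - B \<and> D \<subseteq> B - A \<and>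
        (\<forall>x\<in>A \<inter> B. (\<exists>c\<in>C. E x c) \<and> (\<exists>d\<in>D. E x d)))"

definition tight :: "'v set \<Rightarrow> ('v \<Rightarrow> 'v \<Rightarrow> bool) \<Rightarrow> 'v set set \<Rightarrow> bool" where
  "tight V E S \<longleftrightarrow> separation V E S \<and> (\<exists>A B. S = {A, B} \<and> tight_oriented V E A B)"

definition nested :: "'v set set set \<Rightarrow> bool" where
  "nested N \<longleftrightarrow> (\<forall>S\<in>N. \<forall>T\<in>N. \<exists>s\<in>orientations S. \<exists>t\<in>orientations T. sep_le s t)"

definition canonical :: "('g, 'b) monoid_scheme \<Rightarrow> ('g \<Rightarrow> 'v \<Rightarrow> 'v) \<Rightarrow> 'v set set set \<Rightarrow> bool" where
  "canonical \<Gamma> \<phi> N \<longleftrightarrow> (\<forall>A B g. {A, B} \<in> N \<longrightarrow> g \<in> carrier \<Gamma> \<longrightarrow> {\<phi> g ` A, \<phi> g ` B} \<in> N)"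

end

theory Submission
  imports Defs "HOL-Library.Infinite_Set"
begin


inductive reach :: "('v \<Rightarrow> 'v \<Rightarrow> bool) \<Rightarrow> 'v set \<Rightarrow> 'v \<Rightarrow> 'v \<Rightarrow> bool" for E S where
  rrefl: "u \<in> S \<Longrightarrow> reach E S u u"
| rstep: "reach E S u w \<Longrightarrow> E w w' \<Longrightarrow> w' \<in> S \<Longrightarrow> reach E S u w'"

lemma reach_in: "reach E S u w \<Longrightarrow> u \<in> S \<and> w \<in> S"
  by (induction rule: reach.induct) auto

lemma reach_mono: "reach E S u w \<Longrightarrow> S \<subseteq> T \<Longrightarrow> reach E T u w"
  by (induction rule: reach.induct) (auto intro: reach.intros)

lemma reach_trans: "reach E S v w \<Longrightarrow> reach E S u v \<Longrightarrow> reach E S u w"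
  by (induction rule: reach.induct) (auto intro: reach.intros)

lemma reach_sym:
  assumes sym: "\<And>a b. E a b \<Longrightarrow> E b a"
  shows "reach E S u w \<Longrightarrow> reach E S w u"
proof (induction rule: reach.induct)
  case (rrefl u) then show ?case by (rule reach.rrefl)
next
  case (rstep u w w')
  have "reach E S w' w" using rstep reach_in[OF rstep(1)] sym
    by (meson reach.rrefl reach.rstep)
  then show ?case using rstep(4) reach_trans by metis
qed

lemma conn_avoid_reach:
  "conn_avoid V E X u w \<longleftrightarrow> reach E (V - X) u w"
proof
  assume "conn_avoid V E X u w"
  then obtain p n where p: "p 0 = u" "p n = w" "\<forall>i\<le>n. p i \<in> V - X" "\<forall>i<n. E (p i) (p (Suc i))"
    unfolding conn_avoid_def by blast
  have "\<forall>i. i \<le> n \<longrightarrow> reach E (V - X) u (p i)"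
  proof
    fix i show "i \<le> n \<longrightarrow> reach E (V - X) u (p i)"
    proof (induction i)
      case 0 then show ?case using p by (auto intro: reach.rrefl)
    next
      case (Suc i) then show ?case using p
        by (metis Suc_leD Suc_le_lessD reach.rstep)
    qed
  qed
  then show "reach E (V - X) u w" using p by auto
next
  assume "reach E (V - X) u w"
  then show "conn_avoid V E X u w"
  proof (induction rule: reach.induct)
    case (rrefl u)
    then show ?case unfolding conn_avoid_def by (rule_tac x="\<lambda>_. u" in exI, rule_tac x=0 in exI) auto
  next
    case (rstep u w w')
    then obtain p n where p: "p 0 = u" "p n = w" "\<forall>i\<le>n. p i \<in> V - X" "\<forall>i<n. E (p i) (p (Suc i))"
      unfolding conn_avoid_def by blast
    define q where "q = p(Suc n := w')"
    have "q 0 = u" "q (Suc n) = w'" using p by (auto simp: q_def)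
    moreover have "\<forall>i\<le>Suc n. q i \<in> V - X" using p rstep by (auto simp: q_def le_Suc_eq)
    moreover have "\<forall>i<Suc n. E (q i) (q (Suc i))" using p rstep
      by (auto simp: q_def less_Suc_eq)
    ultimately show ?case unfolding conn_avoid_def by blast
  qed
qed

lemma reach_stays:
  assumes "oriented_sep V E A B" "reach E (V - A \<inter> B) y z" "y \<in> A - B"
  shows "z \<in> A - B"
  using assms(2,3)
proof (induction rule: reach.induct)
  case (rrefl u) then show ?case by simp
next
  case (rstep u w w') then show ?case using assms(1) unfolding oriented_sep_def by blast
qed

lemma first_hit_aux:
  assumes "oriented_sep V E A B" "reach E V z w" "z \<in> A - B"
  shows "(w \<in> A - B \<and> reach E (A - B) z w) \<or> (\<exists>y x. y \<in> A - B \<and> x \<in> A \<inter> B \<and> E y x \<and> reach E (A - B) z y)"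
  using assms(2,3)
proof (induction rule: reach.induct)
  case (rrefl u) then show ?case by (auto intro: reach.rrefl)
next
  case (rstep u w w')
  then show ?case using assms(1) unfolding oriented_sep_def
    by (metis (no_types, lifting) DiffI IntI Un_iff reach.rstep)
qed

lemma first_hit:
  assumes "oriented_sep V E A B" "reach E V z w" "z \<in> A - B" "w \<notin> A - B"
  shows "\<exists>y x. y \<in> A - B \<and> x \<in> A \<inter> B \<and> E y x \<and> reach E (A - B) z y"
  using first_hit_aux[OF assms(1-3)] assms(4) by blast



definition kst :: "('v \<Rightarrow> 'v \<Rightarrow> bool) \<Rightarrow> 'v set \<Rightarrow> 'v \<times> 'v set \<Rightarrow> bool" where
  "kst E S st \<longleftrightarrow> fst st \<in> S - snd st \<and> finite (snd st) \<and> infinite {w. reach E (S - snd st) (fst st) w}"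

lemma reach_split:
  "reach E S' u w \<Longrightarrow> S' = S - P \<Longrightarrow>
    w \<in> insert u (\<Union>y\<in>{y. E u y \<and> y \<in> S - insert u P}. {w. reach E (S - insert u P) y w})"
proof (induction rule: reach.induct)
  case (rrefl u) then show ?case by simp
next
  case (rstep u w w')
  show ?case
  proof (cases "w' = u")
    case True then show ?thesis by simp
  next
    case False
    then have w'S: "w' \<in> S - insert u P" using rstep by auto
    from rstep.IH[OF rstep.prems] show ?thesis
    proof
      assume "w = u" then show ?thesis using w'S rstep by (auto intro: reach.rrefl)
    next
      assume "w \<in> (\<Union>y\<in>{y. E u y \<and> y \<in> S - insert u P}. {w. reach E (S - insert u P) y w})"
      then obtain y where "y \<in> {y. E u y \<and> y \<in> S - insert u P}" "reach E (S - insert u P) y w" by auto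
      then show ?thesis using w'S rstep by (auto intro: reach.rstep)
    qed
  qed
qed

lemma kst_step:
  assumes lf: "\<forall>v\<in>S. finite {w. E v w}" and st: "kst E S (v, P)"
  shows "\<exists>y. E v y \<and> kst E S (y, insert v P)"
proof (rule ccontr)
  assume nex: "\<not> ?thesis"
  let ?P' = "insert v P"
  let ?I = "{y. E v y \<and> y \<in> S - ?P'}"
  have vS: "v \<in> S" "v \<notin> P" "finite P" and inf: "infinite {w. reach E (S - P) v w}"
    using st by (auto simp: kst_def)
  have fI: "finite ?I" using lf vS by (auto intro: finite_subset)
  have sub: "{w. reach E (S - P) v w} \<subseteq> insert v (\<Union>y\<in>?I. {w. reach E (S - ?P') y w})"
    using reach_split[of E "S - P" v _ S P] by blast
  have "\<forall>y\<in>?I. finite {w. reach E (S - ?P') y w}"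
    using nex vS by (auto simp: kst_def)
  then have "finite (insert v (\<Union>y\<in>?I. {w. reach E (S - ?P') y w}))" using fI by auto
  then show False using sub inf finite_subset by blast
qed

lemma koenig:
  assumes lf: "\<forall>v\<in>S. finite {w. E v w}" and v0: "v0 \<in> S" and inf: "infinite {w. reach E S v0 w}"
  shows "\<exists>r. inj r \<and> (\<forall>n. r n \<in> S \<and> E (r n) (r (Suc n)))"
proof -
  define nxt where "nxt = (\<lambda>st. ((SOME y. E (fst st) y \<and> kst E S (y, insert (fst st) (snd st))), insert (fst st) (snd st)))"
  define sq where "sq = (\<lambda>n. (nxt ^^ n) (v0, {}))"
  have sqS: "sq (Suc n) = nxt (sq n)" for n by (simp add: sq_def)
  have nx: "E (fst st) (fst (nxt st)) \<and> kst E S (nxt st)" if "kst E S st" for st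
  proof -
    have "\<exists>y. E (fst st) y \<and> kst E S (y, insert (fst st) (snd st))"
      using kst_step[OF lf, of "fst st" "snd st"] that by simp
    then have "E (fst st) (fst (nxt st)) \<and> kst E S (fst (nxt st), insert (fst st) (snd st))"
      unfolding nxt_def fst_conv by (rule someI_ex)
    then show ?thesis by (simp add: nxt_def)
  qed
  have K0: "kst E S (sq n)" for n
  proof (induction n)
    case 0 then show ?case using v0 inf by (simp add: sq_def kst_def)
  next
    case (Suc n) then show ?case using nx sqS by simp
  qed
  have K: "kst E S (sq n) \<and> E (fst (sq n)) (fst (sq (Suc n)))" for n
    using K0[of n] nx[of "sq n"] sqS[of n] by simp
  have mem: "j < k \<Longrightarrow> fst (sq j) \<in> snd (sq k)" for j k
  proof (induction k)
    case 0 then show ?case by simp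
  next
    case (Suc k) then show ?case by (auto simp: sqS nxt_def less_Suc_eq)
  qed
  have notin: "fst (sq k) \<notin> snd (sq k)" for k using K[of k] by (simp add: kst_def)
  have "inj (\<lambda>n. fst (sq n))"
  proof (rule injI)
    fix a b assume eq: "fst (sq a) = fst (sq b)"
    show "a = b"
    proof (rule ccontr)
      assume "a \<noteq> b"
      then have "a < b \<or> b < a" by arith
      then show False using mem notin eq by metis
    qed
  qed
  moreover have "\<forall>n. fst (sq n) \<in> S \<and> E (fst (sq n)) (fst (sq (Suc n)))"
    using K by (auto simp: kst_def)
  ultimately show ?thesis by blast
qed

lemma mono_fin_stable:
  fixes S :: "nat \<Rightarrow> 'a set"
  assumes mono: "\<And>n. n \<ge> m \<Longrightarrow> S n \<subseteq> S (Suc n)" and sub: "\<And>n. n \<ge> m \<Longrightarrow> S n \<subseteq> F" and fin: "finite F"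
  shows "\<exists>N\<ge>m. \<forall>n\<ge>N. S n = S N"
proof -
  let ?C = "card ` S ` {m..}"
  have "card (S n) \<le> card F" if "n \<ge> m" for n using sub[OF that] fin by (rule card_mono[rotated])
  then have "?C \<subseteq> {0..card F}" by auto
  then have fC: "finite ?C" by (rule finite_subset) simp
  have "?C \<noteq> {}" by auto
  then have "Max ?C \<in> ?C" using fC by (rule Max_in[rotated])
  then obtain N where N: "N \<ge> m" "card (S N) = Max ?C" by auto
  have monoN: "S N \<subseteq> S n" if "n \<ge> N" for n
    using that
  proof (induction n rule: dec_induct)
    case base then show ?case by simp
  next
    case (step k) then show ?case using mono[of k] N by auto
  qed
  have "S n = S N" if "n \<ge> N" for n
  proof -
    have fn: "finite (S n)" using sub[of n] N that fin finite_subset by auto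
    have "card (S n) \<le> Max ?C" using fC that N by (auto intro: Max_ge)
    then show ?thesis using card_subset_eq[OF fn monoN[OF that]] N card_mono[OF fn monoN[OF that]] by auto
  qed
  then show ?thesis using N by blast
qed



lemma graph_sym: "graph V E \<Longrightarrow> E a b \<Longrightarrow> E b a"
  by (simp add: graph_def)

lemma reach_sym_g: "graph V E \<Longrightarrow> reach E S u w \<Longrightarrow> reach E S w u"
  by (erule reach_sym[rotated]) (simp add: graph_def)

lemma orient_pair: "orientations {A, B} = {(A, B), (B, A)}"
  unfolding orientations_def doubleton_eq_iff by blast

lemma oriented_sep_sym: "graph V E \<Longrightarrow> oriented_sep V E A B \<Longrightarrow> oriented_sep V E B A"
  unfolding oriented_sep_def graph_def by blast

lemma tight_oriented_sym: "tight_oriented V E A B \<Longrightarrow> tight_oriented V E B A"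
proof -
  assume "tight_oriented V E A B"
  then obtain C D where "component V E (A \<inter> B) C" "component V E (A \<inter> B) D" "C \<subseteq> A - B" "D \<subseteq> B - A"
     "\<forall>x\<in>A \<inter> B. (\<exists>c\<in>C. E x c) \<and> (\<exists>d\<in>D. E x d)" unfolding tight_oriented_def by blast
  moreover have "B \<inter> A = A \<inter> B" by blast
  ultimately show ?thesis unfolding tight_oriented_def by (intro exI[of _ D] exI[of _ C]) simp
qed

lemma tight_both:
  assumes "graph V E" "tight V E {A, B}"
  shows "oriented_sep V E A B \<and> tight_oriented V E A B"
proof -
  have "separation V E {A, B}" using assms(2) unfolding tight_def by (elim conjE)
  then obtain P Q where PQ: "{A, B} = {P, Q}" "oriented_sep V E P Q"
    unfolding separation_def by (elim exE conjE)
  have "\<exists>P' Q'. {A, B} = {P', Q'} \<and> tight_oriented V E P' Q'" using assms(2) unfolding tight_def by (elim conjE)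
  then obtain P' Q' where PQ': "{A, B} = {P', Q'}" "tight_oriented V E P' Q'"
    by (elim exE conjE)
  have "(A = P \<and> B = Q) \<or> (A = Q \<and> B = P)" using PQ(1) by (simp add: doubleton_eq_iff)
  then have "oriented_sep V E A B"
  proof
    assume "A = P \<and> B = Q" then show ?thesis using PQ(2) by simp
  next
    assume "A = Q \<and> B = P" then show ?thesis using PQ(2) oriented_sep_sym[OF assms(1)] by simp
  qed
  moreover have "(A = P' \<and> B = Q') \<or> (A = Q' \<and> B = P')" using PQ'(1) by (simp add: doubleton_eq_iff)
  then have "tight_oriented V E A B"
  proof
    assume "A = P' \<and> B = Q'" then show ?thesis using PQ'(2) by simp
  next
    assume "A = Q' \<and> B = P'" then show ?thesis using PQ'(2) tight_oriented_sym by simp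
  qed
  ultimately show ?thesis by blast
qed

lemma comp_from:
  assumes "graph V E" "component V E X C" "c \<in> C"
  shows "C = {y. reach E (V - X) c y}"
proof -
  obtain x where x: "x \<in> V - X" "C = {y. reach E (V - X) x y}"
    using assms(2) unfolding component_def conn_avoid_reach by blast
  have xc: "reach E (V - X) x c" using assms(3) x by simp
  have cx: "reach E (V - X) c x" using reach_sym_g[OF assms(1) xc] .
  have "reach E (V - X) x y \<longleftrightarrow> reach E (V - X) c y" for y
    using reach_trans[OF _ cx, of y] reach_trans[OF _ xc, of y] by blast
  then show ?thesis using x(2) by simp
qed

lemma inj_avoid:
  fixes r :: "nat \<Rightarrow> 'v"
  assumes "inj r" "finite X" shows "\<exists>k\<ge>n. r k \<notin> X"
proof -
  have f: "finite (r -` X)" using assms by (rule finite_vimageI[rotated])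
  have "\<not> {n..} \<subseteq> r -` X"
  proof
    assume "{n..} \<subseteq> r -` X"
    then have "finite {n..}" using f by (rule finite_subset)
    then show False using infinite_Ici by blast
  qed
  then show ?thesis by auto
qed


lemma ray_side:
  assumes g: "graph V E" and c: "connected_graph V E" and lf: "locally_finite V E"
    and s: "oriented_sep V E A B" and fX: "finite (A \<inter> B)"
    and inf: "infinite (A - B)" and ne: "B - A \<noteq> {}"
  shows "\<exists>r. ray V E r \<and> (\<forall>n. r n \<in> A)"
proof -
  have AV: "A \<subseteq> V" and BV: "B \<subseteq> V" using s by (auto simp: oriented_sep_def)
  obtain w0 where w0: "w0 \<in> B - A" using ne by blast
  have cov: "A \<subseteq> (\<Union>x\<in>A \<inter> B. {w. reach E A x w})"
  proof
    fix z assume z: "z \<in> A"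
    show "z \<in> (\<Union>x\<in>A \<inter> B. {w. reach E A x w})"
    proof (cases "z \<in> B")
      case True then show ?thesis using z by (auto intro: reach.rrefl)
    next
      case False
      have "w0 \<in> V" "z \<in> V" using w0 z AV BV by auto
      then have "reach E (V - {}) z w0" using c unfolding connected_graph_def conn_avoid_reach[symmetric] by blast
      then have r: "reach E V z w0" by simp
      have zab: "z \<in> A - B" using z False by simp
      have w0n: "w0 \<notin> A - B" using w0 by simp
      obtain y x where yx: "y \<in> A - B" "x \<in> A \<inter> B" "E y x" "reach E (A - B) z y"
        using first_hit[OF s r zab w0n] by (elim exE conjE)
      have "reach E A z y" using reach_mono[OF yx(4)] by simp
      then have "reach E A z x" using yx(2,3) by (auto intro: reach.rstep)
      then have "reach E A x z" by (rule reach_sym_g[OF g])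
      then show ?thesis using yx(2) by blast
    qed
  qed
  have "infinite A" using inf finite_subset[of "A - B" A] by auto
  then have iU: "infinite (\<Union>x\<in>A \<inter> B. {w. reach E A x w})" using cov finite_subset by auto
  have "\<exists>x\<in>A \<inter> B. infinite {w. reach E A x w}"
  proof (rule ccontr)
    assume "\<not> ?thesis"
    then have "finite (\<Union>x\<in>A \<inter> B. {w. reach E A x w})" using fX by auto
    then show False using iU by simp
  qed
  then obtain x where x: "x \<in> A \<inter> B" "infinite {w. reach E A x w}" by blast
  have xA: "x \<in> A" using x(1) by simp
  have lfA: "\<forall>v\<in>A. finite {w. E v w}" using lf AV by (auto simp: locally_finite_def)
  obtain r where r: "inj r" "\<forall>n. r n \<in> A \<and> E (r n) (r (Suc n))" using koenig[OF lfA xA x(2)] by (elim exE conjE)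
  then show ?thesis using AV unfolding ray_def by blast
qed

lemma one_side_finite:
  assumes g: "graph V E" and c: "connected_graph V E" and lf: "locally_finite V E"
    and oe: "one_ended V E"
    and s: "oriented_sep V E A B" and fX: "finite (A \<inter> B)"
  shows "finite (A - B) \<or> finite (B - A)"
proof (rule ccontr)
  assume "\<not> ?thesis"
  then have ia: "infinite (A - B)" and ib: "infinite (B - A)" by auto
  have neb: "B - A \<noteq> {}" using ib by (intro notI) simp
  have nea: "A - B \<noteq> {}" using ia by (intro notI) simp
  obtain r where r: "ray V E r" "\<forall>n. r n \<in> A"
    using ray_side[OF g c lf s fX ia neb] by (elim exE conjE)
  have s': "oriented_sep V E B A" using oriented_sep_sym[OF g s] .
  have fX': "finite (B \<inter> A)" using fX by (simp add: Int_commute)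
  obtain t where t: "ray V E t" "\<forall>n. t n \<in> B"
    using ray_side[OF g c lf s' fX' ib nea] by (elim exE conjE)
  have "\<forall>r s. ray V E r \<longrightarrow> ray V E s \<longrightarrow> equiv_rays V E r s" using oe unfolding one_ended_def by (elim conjE)
  then have "equiv_rays V E r t" using r(1) t(1) by simp
  then have "\<exists>n. \<forall>k\<ge>n. \<forall>l\<ge>n. conn_avoid V E (A \<inter> B) (r k) (t l)"
    using fX unfolding equiv_rays_def by simp
  then obtain n where n: "\<forall>k\<ge>n. \<forall>l\<ge>n. conn_avoid V E (A \<inter> B) (r k) (t l)"
    by (elim exE)
  have ir: "inj r" and it: "inj t" using r(1) t(1) unfolding ray_def by auto
  obtain k where k: "k \<ge> n" "r k \<notin> A \<inter> B" using inj_avoid[OF ir fX, of n] by (elim exE conjE)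
  obtain l where l: "l \<ge> n" "t l \<notin> A \<inter> B" using inj_avoid[OF it fX, of n] by (elim exE conjE)
  have "conn_avoid V E (A \<inter> B) (r k) (t l)" using n k(1) l(1) by simp
  then have "reach E (V - A \<inter> B) (r k) (t l)" by (simp only: conn_avoid_reach)
  moreover have "r k \<in> A - B" using r(2) k(2) by auto
  ultimately have "t l \<in> A - B" by (rule reach_stays[OF s])
  then show False using t(2) l(2) by auto
qed

lemma key:
  assumes ga: "group_action \<Gamma> V \<phi>" and gc: "g \<in> carrier \<Gamma>"
    and s: "A \<union> B = V" and fA: "finite A" and iB: "infinite B"
    and cmp: "\<exists>s\<in>orientations {A, B}. \<exists>t\<in>orientations {\<phi> g ` A, \<phi> g ` B}. sep_le s t"
  shows "(\<phi> g ` A = A \<and> \<phi> g ` B = B) \<or> (\<phi> g ` A \<inter> (A - B) = {} \<and> A \<inter> (\<phi> g ` A - \<phi> g ` B) = {})"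
proof -
  let ?h = "\<phi> g"
  have inj: "inj_on ?h V" and sur: "?h ` V = V"
    using group_action.inj_prop[OF ga gc] group_action.surj_prop[OF ga gc] by auto
  have AV: "A \<subseteq> V" and BV: "B \<subseteq> V" using s by auto
  have cA: "card (?h ` A) = card A" using inj AV by (meson card_image inj_on_subset)
  have fhA: "finite (?h ` A)" using fA by simp
  have hX: "?h ` (A \<inter> B) = ?h ` A \<inter> ?h ` B" using inj_on_image_Int[OF inj AV BV] .
  have "A \<inter> B \<subseteq> V" using AV by blast
  then have cX: "card (?h ` (A \<inter> B)) = card (A \<inter> B)" using inj by (intro card_image) (rule inj_on_subset)
  have fX: "finite (A \<inter> B)" using fA by simp
  have "?h ` (A \<union> B) = V" using sur s by simp
  then have hU: "?h ` A \<union> ?h ` B = V" by (simp only: image_Un)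
  obtain s t where st: "s \<in> {(A, B), (B, A)}" "t \<in> {(?h ` A, ?h ` B), (?h ` B, ?h ` A)}" "sep_le s t"
    using cmp unfolding orient_pair by (elim bexE)
  have s2: "s = (A, B) \<or> s = (B, A)" using st(1) by simp
  have t2: "t = (?h ` A, ?h ` B) \<or> t = (?h ` B, ?h ` A)" using st(2) by simp
  consider
      "sep_le (A, B) (?h ` A, ?h ` B)" | "sep_le (A, B) (?h ` B, ?h ` A)"
    | "sep_le (B, A) (?h ` A, ?h ` B)" | "sep_le (B, A) (?h ` B, ?h ` A)"
    using s2 t2 st(3) by (elim disjE) simp_all
  then show ?thesis
  proof cases
    case 1
    then have a: "A \<subseteq> ?h ` A" "?h ` B \<subseteq> B" by (auto simp: sep_le_def)
    have eA: "?h ` A = A" using card_subset_eq[OF fhA a(1)] cA by simp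
    have "?h ` (A \<inter> B) \<subseteq> A \<inter> B" using hX a eA by auto
    then have eX: "?h ` (A \<inter> B) = A \<inter> B" using card_subset_eq[OF fX _ cX] by simp
    have "B \<subseteq> ?h ` B"
    proof
      fix b assume b: "b \<in> B"
      show "b \<in> ?h ` B"
      proof (cases "b \<in> A")
        case True then show ?thesis using b eX hX by auto
      next
        case False then show ?thesis using b BV hU eA by auto
      qed
    qed
    then show ?thesis using a eA by auto
  next
    case 2
    then show ?thesis by (auto simp: sep_le_def)
  next
    case 3
    then have "B \<subseteq> ?h ` A" by (simp add: sep_le_def)
    then have "finite B" using fhA by (rule finite_subset)
    then show ?thesis using iB by simp
  next
    case 4
    then have a: "?h ` A \<subseteq> A" "B \<subseteq> ?h ` B" by (auto simp: sep_le_def)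
    have eA: "?h ` A = A" using card_subset_eq[OF fA a(1)] cA by simp
    have "A \<inter> B \<subseteq> ?h ` (A \<inter> B)" using hX a eA by auto
    then have eX: "?h ` (A \<inter> B) = A \<inter> B" using card_subset_eq[OF finite_imageI[OF fX] _ cX[symmetric]] by simp
    have "?h ` B \<subseteq> B"
    proof
      fix b assume b: "b \<in> ?h ` B"
      show "b \<in> B"
      proof (cases "b \<in> A")
        case True then show ?thesis using b eX hX eA by auto
      next
        case False then show ?thesis using b hU s eA by auto
      qed
    qed
    then show ?thesis using a eA by auto
  qed
qed



lemma comp_ne: "component V E X C \<Longrightarrow> C \<noteq> {}"
  unfolding component_def conn_avoid_reach by (auto intro: reach.rrefl)

theorem lemma7p6:
  fixes V :: "'v set" and E :: "'v \<Rightarrow> 'v \<Rightarrow> bool"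
    and \<Gamma> :: "('g, 'b) monoid_scheme" and \<phi> :: "'g \<Rightarrow> 'v \<Rightarrow> 'v"
    and N :: "'v set set set"
  assumes "graph V E" and "connected_graph V E" and "locally_finite V E" and "one_ended V E"
    and "quasi_transitive \<Gamma> V E \<phi>"
    and "canonical \<Gamma> \<phi> N" and "nested N"
    and "\<forall>S\<in>N. tight V E S \<and> finite_order S"
  shows "\<not> (\<exists>f :: nat \<Rightarrow> 'v set \<times> 'v set. \<forall>n. f n \<in> vec N \<and> sep_le (f n) (f (Suc n)) \<and> f n \<noteq> f (Suc n))"
proof
  note g = assms(1) and cn = assms(2) and lf = assms(3) and oe = assms(4)
  assume "\<exists>f :: nat \<Rightarrow> 'v set \<times> 'v set. \<forall>n. f n \<in> vec N \<and> sep_le (f n) (f (Suc n)) \<and> f n \<noteq> f (Suc n)"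
  then obtain f :: "nat \<Rightarrow> 'v set \<times> 'v set" where f: "\<forall>n. f n \<in> vec N \<and> sep_le (f n) (f (Suc n)) \<and> f n \<noteq> f (Suc n)"
    by (elim exE)
  define A where "A = (\<lambda>n. fst (f n))"
  define B where "B = (\<lambda>n. snd (f n))"
  have fAB: "f n = (A n, B n)" for n by (simp add: A_def B_def)
  have inN: "{A n, B n} \<in> N" for n
  proof -
    have "f n \<in> vec N" using f by simp
    then obtain S where S: "S \<in> N" "f n \<in> orientations S" unfolding vec_def by (elim UN_E)
    then have "S = {A n, B n}" unfolding orientations_def fAB by simp
    then show ?thesis using S(1) by simp
  qed
  have tN: "tight V E {A n, B n} \<and> finite_order {A n, B n}" for n using bspec[OF assms(8) inN] .
  have sep: "oriented_sep V E (A n) (B n)" and tor: "tight_oriented V E (A n) (B n)" for n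
    using tight_both[OF g] tN by auto
  have fX: "finite (A n \<inter> B n)" for n
  proof -
    have "(A n, B n) \<in> orientations {A n, B n}" unfolding orient_pair by simp
    then show ?thesis using tN[of n] unfolding finite_order_def by auto
  qed
  have AU: "A n \<union> B n = V" for n using sep[of n] by (simp add: oriented_sep_def)
  have AV: "A n \<subseteq> V" and BV: "B n \<subseteq> V" for n using AU[of n] by auto
  have Aeq: "A n = (V - B n) \<union> (A n \<inter> B n)" for n using AU[of n] by auto
  have Beq: "B n = V - (A n - B n)" for n using AU[of n] by auto
  have Aeq2: "A n = (A n - B n) \<union> (A n \<inter> B n)" for n by auto
  have step: "A n \<subseteq> A (Suc n) \<and> B (Suc n) \<subseteq> B n" for n
    using f fAB unfolding sep_le_def by (metis fst_conv snd_conv)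
  have neq: "f n \<noteq> f (Suc n)" for n using f by simp
  have Amono: "m \<le> n \<Longrightarrow> A m \<subseteq> A n" for m n
    by (rule lift_Suc_mono_le[of A]) (use step in auto)
  have Bmono: "m \<le> n \<Longrightarrow> B n \<subseteq> B m" for m n
    by (rule lift_Suc_antimono_le[of B]) (use step in auto)
  have amono: "m \<le> n \<Longrightarrow> A m - B m \<subseteq> A n - B n" for m n
    using Amono Bmono by blast
  show False
  proof (cases "\<exists>n0. finite (B n0 - A n0)")
    case True
    then obtain n0 where n0: "finite (B n0 - A n0)" by (elim exE)
    have "B n0 \<subseteq> (B n0 - A n0) \<union> (A n0 \<inter> B n0)" by auto
    then have fB0: "finite (B n0)" using n0 fX[of n0] finite_subset by auto
    have "\<exists>N\<ge>n0. \<forall>n\<ge>N. B n0 - B n = B n0 - B N"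
    proof (rule mono_fin_stable[of n0 "\<lambda>n. B n0 - B n" "B n0"])
      fix n show "B n0 - B n \<subseteq> B n0 - B (Suc n)" using step[of n] by auto
      show "B n0 - B n \<subseteq> B n0" by auto
    qed (rule fB0)
    then obtain N1 where N1: "N1 \<ge> n0" "\<forall>n\<ge>N1. B n0 - B n = B n0 - B N1" by (elim exE conjE)
    have BN1: "n \<ge> N1 \<Longrightarrow> B n = B N1" for n
    proof -
      assume n: "n \<ge> N1"
      have s1: "B n \<subseteq> B n0" using Bmono[of n0 n] n N1(1) by simp
      have s2: "B N1 \<subseteq> B n0" using Bmono[of n0 N1] N1(1) by simp
      have e: "B n0 - B n = B n0 - B N1" using N1(2)[rule_format, OF n] .
      have "B n = B n0 - (B n0 - B n)" using s1 by blast
      also have "\<dots> = B n0 - (B n0 - B N1)" using e by simp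
      also have "\<dots> = B N1" using s2 by blast
      finally show ?thesis .
    qed
    obtain N2 where N2: "N2 \<ge> N1" "\<forall>n\<ge>N2. A n \<inter> B n = A N2 \<inter> B N2"
    proof -
      have "\<exists>N\<ge>N1. \<forall>n\<ge>N. A n \<inter> B n = A N \<inter> B N"
      proof (rule mono_fin_stable[of N1 "\<lambda>n. A n \<inter> B n" "B n0"])
        fix n assume n: "n \<ge> N1"
        show "A n \<inter> B n \<subseteq> A (Suc n) \<inter> B (Suc n)" using step[of n] BN1[OF n] BN1[of "Suc n"] n by auto
        show "A n \<inter> B n \<subseteq> B n0" using Bmono[of n0 n] n N1(1) by auto
      qed (rule fB0)
      then obtain N where "N \<ge> N1" "\<forall>n\<ge>N. A n \<inter> B n = A N \<inter> B N" by (elim exE conjE)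
      then show ?thesis by (rule that)
    qed
    have "B (Suc N2) = B N2" using BN1[of N2] BN1[of "Suc N2"] N2(1) by simp
    moreover have "A (Suc N2) \<inter> B (Suc N2) = A N2 \<inter> B N2" using N2(2)[rule_format, of "Suc N2"] by simp
    ultimately have "A (Suc N2) = A N2" using Aeq[of N2] Aeq[of "Suc N2"] by simp
    then have "f (Suc N2) = f N2" using fAB \<open>B (Suc N2) = B N2\<close> by simp
    then show False using neq[of N2] by simp
  next
    case False
    then have ib: "infinite (B n - A n)" for n by simp
    have fa: "finite (A n - B n)" for n using one_side_finite[OF g cn lf oe sep fX] ib by blast
    have fA: "finite (A n)" for n using Aeq2[of n] fa[of n] fX[of n] by (metis finite_UnI)
    have iB: "infinite (B n)" for n using ib[of n] finite_subset[of "B n - A n" "B n"] by auto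
    have qt: "acts_by_automorphisms \<Gamma> V E \<phi>" "finite (orbits \<Gamma> V \<phi>)"
      using assms(5) unfolding quasi_transitive_def by auto
    have ga: "group_action \<Gamma> V \<phi>" using qt(1) unfolding acts_by_automorphisms_def by simp
    have grp: "group \<Gamma>" using group_action.group_hom[OF ga] group_hom.axioms(1) by blast
    have KEY: "(\<phi> gg ` A n = A n \<and> \<phi> gg ` B n = B n) \<or>
        (\<phi> gg ` A n \<inter> (A n - B n) = {} \<and> A n \<inter> (\<phi> gg ` A n - \<phi> gg ` B n) = {})"
      if gc: "gg \<in> carrier \<Gamma>" for gg n
    proof -
      have cN: "\<forall>A B g. {A, B} \<in> N \<longrightarrow> g \<in> carrier \<Gamma> \<longrightarrow> {\<phi> g ` A, \<phi> g ` B} \<in> N"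
        using assms(6) unfolding canonical_def .
      have gN: "{\<phi> gg ` A n, \<phi> gg ` B n} \<in> N" using cN[rule_format, OF inN[of n] gc] .
      have nN: "\<forall>S\<in>N. \<forall>T\<in>N. \<exists>s\<in>orientations S. \<exists>t\<in>orientations T. sep_le s t"
        using assms(7) unfolding nested_def .
      have "\<exists>s\<in>orientations {A n, B n}. \<exists>t\<in>orientations {\<phi> gg ` A n, \<phi> gg ` B n}. sep_le s t"
        using nN[rule_format, OF inN[of n] gN] .
      then show ?thesis by (rule key[OF ga gc AU fA iB])
    qed
    have S3: "\<phi> gg w \<notin> A n \<inter> B n" if w: "w \<in> A j - B j" and jn: "j \<le> n" and gc: "gg \<in> carrier \<Gamma>" for w j n gg
    proof -
      have wn: "w \<in> A n - B n" using amono[OF jn] w by auto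
      have wV: "w \<in> V" using wn AV by auto
      have inj: "inj_on (\<phi> gg) V" using group_action.inj_prop[OF ga gc] .
      have nb: "\<phi> gg w \<notin> \<phi> gg ` B n" using inj_on_image_mem_iff[OF inj wV BV] wn by simp
      have na: "\<phi> gg w \<in> \<phi> gg ` A n" using wn by simp
      from KEY[OF gc, of n] show ?thesis
      proof
        assume "\<phi> gg ` A n = A n \<and> \<phi> gg ` B n = B n"
        then show ?thesis using nb by auto
      next
        assume "\<phi> gg ` A n \<inter> (A n - B n) = {} \<and> A n \<inter> (\<phi> gg ` A n - \<phi> gg ` B n) = {}"
        then show ?thesis using na nb by auto
      qed
    qed
    define Orb where "Orb = orbits \<Gamma> V \<phi>"
    define jo where "jo = (\<lambda>ob. LEAST j. ob \<inter> (A j - B j) \<noteq> {})"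
    define m where "m = Max (insert 0 (jo ` Orb))"
    have fOrb: "finite Orb" using qt(2) Orb_def by simp
    have S4: "x \<notin> A k - B k" if mn: "m \<le> n" and x: "x \<in> A n \<inter> B n" for n x k
    proof
      assume xk: "x \<in> A k - B k"
      have xV: "x \<in> V" using x AV by auto
      define ob where "ob = orbit \<Gamma> \<phi> x"
      have oO: "ob \<in> Orb" unfolding Orb_def orbits_def ob_def by (rule CollectI, rule exI[of _ x]) (simp add: xV)
      have xo: "x \<in> ob" unfolding ob_def using group_action.orbit_refl[OF ga xV] .
      have "ob \<inter> (A k - B k) \<noteq> {}" using xo xk by blast
      then have "ob \<inter> (A (jo ob) - B (jo ob)) \<noteq> {}" unfolding jo_def by (rule LeastI)
      then obtain w where w: "w \<in> ob" "w \<in> A (jo ob) - B (jo ob)" by blast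
      obtain h where h: "h \<in> carrier \<Gamma>" "w = \<phi> h x" using w(1) unfolding ob_def orbit_def by blast
      have xw: "\<phi> (inv\<^bsub>\<Gamma>\<^esub> h) w = x" using group_action.orbit_sym_aux[OF ga h(1) xV h(2)[symmetric]] .
      have ih: "inv\<^bsub>\<Gamma>\<^esub> h \<in> carrier \<Gamma>" using group.inv_closed[OF grp h(1)] .
      have "jo ob \<le> m" unfolding m_def using fOrb oO by (intro Max_ge) auto
      then have "\<phi> (inv\<^bsub>\<Gamma>\<^esub> h) w \<notin> A n \<inter> B n" using S3[OF w(2) _ ih] mn by simp
      then show False using xw x by simp
    qed
    have S5: "A n \<inter> B n \<subseteq> A n' \<inter> B n'" if "m \<le> n" "n \<le> n'" for n n'
    proof
      fix x assume x: "x \<in> A n \<inter> B n"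
      have "x \<in> A n'" using x Amono[OF that(2)] by auto
      moreover have "x \<notin> A n' - B n'" using S4[OF that(1) x] .
      ultimately show "x \<in> A n' \<inter> B n'" by auto
    qed
    obtain x0 where x0: "x0 \<in> A m \<inter> B m"
    proof -
      obtain C D where CD: "component V E (A m \<inter> B m) C" "C \<subseteq> A m - B m"
        using tor[of m] unfolding tight_oriented_def by (elim exE conjE)
      obtain z where z: "z \<in> C" using comp_ne[OF CD(1)] by blast
      have za: "z \<in> A m - B m" using z CD(2) by blast
      obtain w0 where w0: "w0 \<in> B m - A m" using ib[of m] by (metis ex_in_conv infinite_imp_nonempty)
      have "z \<in> V" "w0 \<in> V" using za w0 AV BV by auto
      then have "conn_avoid V E {} z w0" using cn unfolding connected_graph_def by blast
      then have "reach E (V - {}) z w0" by (simp only: conn_avoid_reach)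
      then have r: "reach E V z w0" by simp
      have wn: "w0 \<notin> A m - B m" using w0 by simp
      obtain y x where "x \<in> A m \<inter> B m" using first_hit[OF sep[of m] r za wn] by (elim exE conjE)
      then show ?thesis by (rule that)
    qed
    have x0n: "x0 \<in> A n \<inter> B n" if "n \<ge> m" for n using S5[OF order_refl that] x0 by auto
    have x0V: "x0 \<in> V" using x0 AV by auto
    have "\<forall>n. \<exists>C. component V E (A n \<inter> B n) C \<and> C \<subseteq> A n - B n \<and> (\<forall>x\<in>A n \<inter> B n. \<exists>c\<in>C. E x c)"
    proof
      fix n
      obtain C D where CD: "component V E (A n \<inter> B n) C" "C \<subseteq> A n - B n" "\<forall>x\<in>A n \<inter> B n. (\<exists>c\<in>C. E x c) \<and> (\<exists>d\<in>D. E x d)"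
        using tor[of n] unfolding tight_oriented_def by (elim exE conjE)
      then show "\<exists>C. component V E (A n \<inter> B n) C \<and> C \<subseteq> A n - B n \<and> (\<forall>x\<in>A n \<inter> B n. \<exists>c\<in>C. E x c)"
        by blast
    qed
    then obtain Cf where Cf: "\<forall>n. component V E (A n \<inter> B n) (Cf n) \<and> Cf n \<subseteq> A n - B n \<and> (\<forall>x\<in>A n \<inter> B n. \<exists>c\<in>Cf n. E x c)"
      by (metis choice)
    define cc where "cc = (\<lambda>n. SOME c. c \<in> Cf n \<and> E x0 c)"
    have cc: "cc n \<in> Cf n \<and> E x0 (cc n)" if "n \<ge> m" for n
    proof -
      have "\<exists>c. c \<in> Cf n \<and> E x0 c" using Cf x0n[OF that] by blast
      then show ?thesis unfolding cc_def by (rule someI_ex)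
    qed
    have Ccc: "Cf n = {y. reach E (V - A n \<inter> B n) (cc n) y}" if "n \<ge> m" for n
      using comp_from[OF g _ ] Cf cc[OF that] by blast
    have infI0: "infinite {m..}" by (rule infinite_Ici)
    have "cc ` {m..} \<subseteq> {w. E x0 w}" using cc by auto
    moreover have "finite {w. E x0 w}" using lf x0V unfolding locally_finite_def by blast
    ultimately have "finite (cc ` {m..})" by (rule finite_subset)
    then obtain n1 where n1: "n1 \<in> {m..}" "infinite {n \<in> {m..}. cc n = cc n1}"
      using pigeonhole_infinite[OF infI0] by blast
    define I where "I = {n \<in> {m..}. cc n = cc n1}"
    have infI: "infinite I" using n1 I_def by simp
    have m1: "m \<le> n1" using n1 by simp
    have Csub: "Cf n \<subseteq> Cf n1" if "n \<in> I" "n \<ge> n1" for n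
    proof
      fix y assume y: "y \<in> Cf n"
      have nm: "n \<ge> m" using that I_def by simp
      have "reach E (V - A n \<inter> B n) (cc n) y" using y Ccc[OF nm] by simp
      moreover have "cc n = cc n1" using that I_def by simp
      moreover have "V - A n \<inter> B n \<subseteq> V - A n1 \<inter> B n1" using S5[OF m1 that(2)] by blast
      ultimately have "reach E (V - A n1 \<inter> B n1) (cc n1) y" using reach_mono by metis
      then show "y \<in> Cf n1" using Ccc[OF m1] by simp
    qed
    define F where "F = (\<Union>c\<in>Cf n1. {w. E c w})"
    have fF: "finite F"
    proof -
      have "finite (Cf n1)" using Cf fa[of n1] finite_subset by blast
      moreover have "\<forall>c\<in>Cf n1. finite {w. E c w}" using Cf AV lf unfolding locally_finite_def by blast
      ultimately show ?thesis unfolding F_def by blast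
    qed
    have XF: "A n \<inter> B n \<subseteq> F" if "n \<ge> m" for n
    proof -
      obtain n' where n': "n' \<ge> max n n1" "n' \<in> I" using infI unfolding infinite_nat_iff_unbounded_le by blast
      have "A n \<inter> B n \<subseteq> A n' \<inter> B n'" using S5[OF that] n' by simp
      moreover have "A n' \<inter> B n' \<subseteq> F"
      proof
        fix x assume x: "x \<in> A n' \<inter> B n'"
        then obtain c where c: "c \<in> Cf n'" "E x c" using Cf by blast
        have "c \<in> Cf n1" using Csub[OF n'(2)] n'(1) c(1) by auto
        then show "x \<in> F" unfolding F_def using graph_sym[OF g c(2)] by blast
      qed
      ultimately show ?thesis by blast
    qed
    have "\<exists>N\<ge>m. \<forall>n\<ge>N. A n \<inter> B n = A N \<inter> B N"
    proof (rule mono_fin_stable[of m "\<lambda>n. A n \<inter> B n" F])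
      fix n assume "m \<le> n" then show "A n \<inter> B n \<subseteq> A (Suc n) \<inter> B (Suc n)" using S5 by simp
    next
      fix n assume "m \<le> n" then show "A n \<inter> B n \<subseteq> F" by (rule XF)
    qed (rule fF)
    then obtain N1 where N1: "N1 \<ge> m" "\<forall>n\<ge>N1. A n \<inter> B n = A N1 \<inter> B N1" by (elim exE conjE)
    define XX where "XX = A N1 \<inter> B N1"
    have XXn: "A n \<inter> B n = XX" if "n \<ge> N1" for n using N1(2)[rule_format, OF that] XX_def by simp
    define F' where "F' = (\<Union>x\<in>XX. {w. E x w})"
    have fF': "finite F'"
    proof -
      have "finite XX" using fX XX_def by simp
      moreover have "\<forall>x\<in>XX. finite {w. E x w}" using AV lf XX_def unfolding locally_finite_def by blast
      ultimately show ?thesis unfolding F'_def by blast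
    qed
    have aeq: "A n - B n = (\<Union>y\<in>F' \<inter> (A n - B n). {z. reach E (V - XX) y z})" if n: "n \<ge> N1" for n
    proof (intro equalityI subsetI)
      fix z assume za: "z \<in> A n - B n"
      obtain w0 where w0: "w0 \<in> B n - A n" using ib[of n] by (metis ex_in_conv infinite_imp_nonempty)
      have "z \<in> V" "w0 \<in> V" using za w0 AV BV by auto
      then have "conn_avoid V E {} z w0" using cn unfolding connected_graph_def by blast
      then have "reach E (V - {}) z w0" by (simp only: conn_avoid_reach)
      then have r: "reach E V z w0" by simp
      have wn: "w0 \<notin> A n - B n" using w0 by simp
      obtain y x where yx: "y \<in> A n - B n" "x \<in> A n \<inter> B n" "E y x" "reach E (A n - B n) z y"
        using first_hit[OF sep[of n] r za wn] by (elim exE conjE)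
      have yF: "y \<in> F'" unfolding F'_def using XXn[OF n] yx(2) graph_sym[OF g yx(3)] by blast
      have "reach E (A n - B n) y z" using reach_sym_g[OF g yx(4)] .
      moreover have "A n - B n \<subseteq> V - XX" using XXn[OF n] AV by blast
      ultimately have "reach E (V - XX) y z" by (rule reach_mono)
      then show "z \<in> (\<Union>y\<in>F' \<inter> (A n - B n). {z. reach E (V - XX) y z})" using yF yx(1) by blast
    next
      fix z assume "z \<in> (\<Union>y\<in>F' \<inter> (A n - B n). {z. reach E (V - XX) y z})"
      then obtain y where y: "y \<in> A n - B n" "reach E (V - XX) y z" by blast
      have "reach E (V - A n \<inter> B n) y z" using y(2) XXn[OF n] by simp
      then show "z \<in> A n - B n" using reach_stays[OF sep[of n]] y(1) by blast
    qed
    have "\<exists>N\<ge>N1. \<forall>n\<ge>N. F' \<inter> (A n - B n) = F' \<inter> (A N - B N)"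
    proof (rule mono_fin_stable[of N1 "\<lambda>n. F' \<inter> (A n - B n)" F'])
      fix n show "F' \<inter> (A n - B n) \<subseteq> F' \<inter> (A (Suc n) - B (Suc n))" using amono[of n "Suc n"] by auto
    next
      fix n show "F' \<inter> (A n - B n) \<subseteq> F'" by auto
    qed (rule fF')
    then obtain N2 where N2: "N2 \<ge> N1" "\<forall>n\<ge>N2. F' \<inter> (A n - B n) = F' \<inter> (A N2 - B N2)" by (elim exE conjE)
    have T: "F' \<inter> (A (Suc N2) - B (Suc N2)) = F' \<inter> (A N2 - B N2)" using N2(2)[rule_format, of "Suc N2"] by simp
    have ae: "A (Suc N2) - B (Suc N2) = A N2 - B N2"
      using aeq[of N2] aeq[of "Suc N2"] N2(1) T by simp
    have xe: "A (Suc N2) \<inter> B (Suc N2) = A N2 \<inter> B N2"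
      using XXn[of N2] XXn[of "Suc N2"] N2(1) by simp
    have "A (Suc N2) = A N2" using Aeq2[of N2] Aeq2[of "Suc N2"] ae xe by simp
    moreover have "B (Suc N2) = B N2" using Beq[of N2] Beq[of "Suc N2"] ae by simp
    ultimately have "f (Suc N2) = f N2" using fAB by simp
    then show False using neq[of N2] by simp
  qed
qed

end
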